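(* Let $s\ge1$ be an integer and let $(G,Z)$ be a dyadic plantation. Then there exists $X\subseteq Z$ with $|X|\le 2\phi(s)$ such that exploding the vertices of $X$ yields a dyadic plantation with at most $2|Z|$ binary vertices.
   Context: Graphs are finite and simple. Two subgraphs are anticomplete if their vertex sets are disjoint and no edge joins them. $G$ is $s\mathcal{O}$-free if no $s$ cycles of $G$ are pairwise vertex-disjoint and pairwise anticomplete. $Z\subseteq V(G)$ is cycle-hitting if every cycle of $G$ has a vertex in $Z$. A plantation is a pair $(G,Z)$ with $G$ an $s\mathcal{O}$-free graph and $Z$ cycle-hitting. $(G,Z)$ is dyadic if $Z$ is stable and every vertex of $V(G)\setminus Z$ has at most two neighbours in $Z$; a vertex of $V(G)\setminus Z$ is binary if it has exactly two neighbours in $Z$. Exploding $v\in Z$ produces $(G',Z\setminus\{v\})$, where $G'$ is obtained from $G$ by deleting $v$ and all its neighbours in $V(G)\setminus Z$; exploding a set means exploding its vertices one at a time. $\phi(s)\ge0$ denotes a number (which exists by the Erdős–Pósa theorem) such that every multigraph in which no $s$ cycles are pairwise vertex-disjoint has a set of at most $\phi(s)$ vertices meeting every cycle; in multigraphs, loops and pairs of parallel edges count as cycles. *)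

theory Defs
  imports Main
begin

definition graph :: "'a set \<Rightarrow> 'a set set \<Rightarrow> bool" where
  "graph V E \<longleftrightarrow> finite V \<and> (\<forall>e\<in>E. \<exists>u v. u \<noteq> v \<and> u \<in> V \<and> v \<in> V \<and> e = {u, v})"

definition nbrs :: "'a set set \<Rightarrow> 'a \<Rightarrow> 'a set" where
  "nbrs E v = {u. {u, v} \<in> E}"

definition is_cycle :: "'a set \<Rightarrow> 'a set set \<Rightarrow> 'a list \<Rightarrow> bool" where
  "is_cycle V E vs \<longleftrightarrow> length vs \<ge> 3 \<and> distinct vs \<and> set vs \<subseteq> V \<and>
     (\<forall>i < length vs. {vs ! i, vs ! ((i + 1) mod length vs)} \<in> E)"

definition anticomplete :: "'a set set \<Rightarrow> 'a set \<Rightarrow> 'a set \<Rightarrow> bool" where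
  "anticomplete E A B \<longleftrightarrow> A \<inter> B = {} \<and> (\<forall>u\<in>A. \<forall>v\<in>B. {u, v} \<notin> E)"

definition sO_free :: "nat \<Rightarrow> 'a set \<Rightarrow> 'a set set \<Rightarrow> bool" where
  "sO_free s V E \<longleftrightarrow> \<not> (\<exists>cs. length cs = s \<and> (\<forall>i < s. is_cycle V E (cs ! i)) \<and>
     (\<forall>i < s. \<forall>j < s. i \<noteq> j \<longrightarrow> anticomplete E (set (cs ! i)) (set (cs ! j))))"

definition cycle_hitting :: "'a set \<Rightarrow> 'a set set \<Rightarrow> 'a set \<Rightarrow> bool" where
  "cycle_hitting V E Z \<longleftrightarrow> Z \<subseteq> V \<and> (\<forall>vs. is_cycle V E vs \<longrightarrow> set vs \<inter> Z \<noteq> {})"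

definition plantation :: "nat \<Rightarrow> 'a set \<Rightarrow> 'a set set \<Rightarrow> 'a set \<Rightarrow> bool" where
  "plantation s V E Z \<longleftrightarrow> graph V E \<and> sO_free s V E \<and> cycle_hitting V E Z"

definition stable :: "'a set set \<Rightarrow> 'a set \<Rightarrow> bool" where
  "stable E Z \<longleftrightarrow> (\<forall>u\<in>Z. \<forall>v\<in>Z. {u, v} \<notin> E)"

definition dyadic :: "nat \<Rightarrow> 'a set \<Rightarrow> 'a set set \<Rightarrow> 'a set \<Rightarrow> bool" where
  "dyadic s V E Z \<longleftrightarrow> plantation s V E Z \<and> stable E Z \<and>
     (\<forall>v \<in> V - Z. card (nbrs E v \<inter> Z) \<le> 2)"

definition binary_vertices :: "'a set \<Rightarrow> 'a set set \<Rightarrow> 'a set \<Rightarrow> 'a set" where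
  "binary_vertices V E Z = {v \<in> V - Z. card (nbrs E v \<inter> Z) = 2}"

definition del_vertices :: "'a set \<times> 'a set set \<Rightarrow> 'a set \<Rightarrow> 'a set \<times> 'a set set" where
  "del_vertices G D = (fst G - D, {e \<in> snd G. e \<inter> D = {}})"

definition explode :: "'a \<Rightarrow> ('a set \<times> 'a set set) \<times> 'a set \<Rightarrow> ('a set \<times> 'a set set) \<times> 'a set" where
  "explode v GZ = (let (G, Z) = GZ in
     (del_vertices G ({v} \<union> (nbrs (snd G) v \<inter> (fst G - Z))), Z - {v}))"

definition explode_list :: "'a list \<Rightarrow> ('a set \<times> 'a set set) \<times> 'a set \<Rightarrow> ('a set \<times> 'a set set) \<times> 'a set" where
  "explode_list xs GZ = foldl (\<lambda>acc v. explode v acc) GZ xs"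

text \<open>A finite multigraph with vertex set MV and edge set ME (edge names), where
ends e is the set of endpoints of e (one endpoint for a loop, two otherwise).
Vertices and edges are labelled by naturals, which is no loss of generality for
finite multigraphs.\<close>

definition multigraph :: "nat set \<Rightarrow> nat set \<Rightarrow> (nat \<Rightarrow> nat set) \<Rightarrow> bool" where
  "multigraph MV ME ends \<longleftrightarrow> finite MV \<and> finite ME \<and>
     (\<forall>e\<in>ME. ends e \<subseteq> MV \<and> 1 \<le> card (ends e) \<and> card (ends e) \<le> 2)"

text \<open>For k = 1 this is a
loop, for k = 2 a pair of parallel edges.\<close>

definition mcycle :: "nat set \<Rightarrow> nat set \<Rightarrow> (nat \<Rightarrow> nat set) \<Rightarrow> nat list \<Rightarrow> bool" where
  "mcycle MV ME ends vs \<longleftrightarrow> (\<exists>es. length vs \<ge> 1 \<and> length es = length vs \<and>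
     distinct vs \<and> distinct es \<and> set vs \<subseteq> MV \<and> set es \<subseteq> ME \<and>
     (\<forall>i < length vs. ends (es ! i) = {vs ! i, vs ! ((i + 1) mod length vs)}))"

definition EP_bound :: "nat \<Rightarrow> nat \<Rightarrow> bool" where
  "EP_bound s phi \<longleftrightarrow> (\<forall>MV ME ends. multigraph MV ME ends \<longrightarrow>
     \<not> (\<exists>cs. length cs = s \<and> (\<forall>i < s. mcycle MV ME ends (cs ! i)) \<and>
          (\<forall>i < s. \<forall>j < s. i \<noteq> j \<longrightarrow> set (cs ! i) \<inter> set (cs ! j) = {})) \<longrightarrow>
     (\<exists>H \<subseteq> MV. card H \<le> phi \<and> (\<forall>vs. mcycle MV ME ends vs \<longrightarrow> set vs \<inter> H \<noteq> {})))"

end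

theory Submission
  imports Defs
begin


definition gcycw :: "'v set \<Rightarrow> 'e set \<Rightarrow> ('e \<Rightarrow> 'v set) \<Rightarrow> 'v list \<Rightarrow> 'e list \<Rightarrow> bool" where
 "gcycw MV ME ends vs es \<longleftrightarrow> length vs \<ge> 1 \<and> length es = length vs \<and> distinct vs \<and> distinct es \<and>
   set vs \<subseteq> MV \<and> set es \<subseteq> ME \<and> (\<forall>i<length vs. ends (es!i) = {vs!i, vs!((i+1) mod length vs)})"

definition gpath :: "'v set \<Rightarrow> 'e set \<Rightarrow> ('e \<Rightarrow> 'v set) \<Rightarrow> 'v list \<Rightarrow> 'e list \<Rightarrow> bool" where
 "gpath MV ME ends vs es \<longleftrightarrow> length vs = length es + 1 \<and> distinct vs \<and> distinct es \<and>
   set vs \<subseteq> MV \<and> set es \<subseteq> ME \<and> (\<forall>i<length es. ends (es!i) = {vs!i, vs!(Suc i)})"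

lemma mcycle_gcycw: "mcycle MV ME ends vs \<longleftrightarrow> (\<exists>es. gcycw MV ME ends vs es)"
  by (simp add: mcycle_def gcycw_def)

lemma gcycw_mono: "gcycw MV ME ends vs es \<Longrightarrow> MV \<subseteq> MV' \<Longrightarrow> ME \<subseteq> ME' \<Longrightarrow> gcycw MV' ME' ends vs es"
  unfolding gcycw_def by blast

lemma gcycw_ends: "gcycw MV ME ends vs es \<Longrightarrow> b \<in> set es \<Longrightarrow> ends b \<subseteq> set vs"
proof -
  assume a: "gcycw MV ME ends vs es" "b \<in> set es"
  then obtain p where p: "p < length es" "b = es!p" by (metis in_set_conv_nth)
  have "length vs \<ge> 1" "length es = length vs" using a unfolding gcycw_def by auto
  then have "(p+1) mod length vs < length vs" by (intro mod_less_divisor) linarith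
  then show ?thesis using a p unfolding gcycw_def by auto
qed

lemma leaf:
  assumes fin: "finite MV" "finite ME" and E2: "\<forall>e\<in>ME. ends e \<subseteq> MV \<and> card (ends e) = 2"
    and nc: "\<forall>vs es. \<not> gcycw MV ME ends vs es" and ne: "MV \<noteq> {}"
  shows "\<exists>v\<in>MV. \<forall>e\<in>ME. \<forall>e'\<in>ME. v \<in> ends e \<longrightarrow> v \<in> ends e' \<longrightarrow> e = e'"
proof (cases "ME = {}")
  case True then show ?thesis using ne by auto
next
  case False
  then obtain e where e: "e \<in> ME" by auto
  then obtain a b where ab: "ends e = {a,b}" "a \<noteq> b" using E2 by (meson card_2_iff)
  have ab2: "a \<in> MV" "b \<in> MV" using E2 e ab by auto
  let ?P = "\<lambda>p. gpath MV ME ends (fst p) (snd p)"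
  have P0: "?P ([a,b],[e])" using ab ab2 e unfolding gpath_def by auto
  have bnd: "\<forall>p. ?P p \<longrightarrow> length (snd p) < card MV + 1"
  proof (intro allI impI)
    fix p assume "?P p"
    then have "length (fst p) = length (snd p) + 1" "distinct (fst p)" "set (fst p) \<subseteq> MV"
      unfolding gpath_def by auto
    then show "length (snd p) < card MV + 1"
      by (metis add_less_cancel_right card_mono distinct_card fin(1) le_imp_less_Suc Suc_eq_plus1 less_le_not_le order.strict_trans1 not_less_eq)
  qed
  obtain p where pP: "?P p" and pmax: "\<forall>q. ?P q \<longrightarrow> length (snd q) \<le> length (snd p)"
    using ex_has_greatest_nat[of ?P "([a,b],[e])" "\<lambda>p. length (snd p)", OF P0 bnd] by blast
  obtain vs es where p: "p = (vs, es)" by force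
  have gp: "gpath MV ME ends vs es" using pP p by simp
  have les: "length es \<ge> 1" using pmax[rule_format, OF P0] p by simp
  have lv: "length vs = length es + 1" and dv: "distinct vs" and de: "distinct es"
    and sv: "set vs \<subseteq> MV" and se: "set es \<subseteq> ME"
    and ee: "\<forall>i<length es. ends (es!i) = {vs!i, vs!(Suc i)}" using gp unfolding gpath_def by auto
  define v0 where "v0 = vs!0"
  define e0 where "e0 = es!0"
  have uniq: "\<forall>f\<in>ME. v0 \<in> ends f \<longrightarrow> f = e0"
  proof (intro ballI impI, rule ccontr)
    fix f assume f: "f \<in> ME" "v0 \<in> ends f" "f \<noteq> e0"
    obtain w where w: "ends f = {v0, w}" "w \<noteq> v0"
      using E2 f by (metis card_2_iff insert_commute insertE singletonD)
    have wMV: "w \<in> MV" using E2 f w by auto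
    show False
    proof (cases "w \<in> set vs")
      case False
      have fne: "f \<notin> set es"
      proof
        assume "f \<in> set es"
        then obtain i where i: "i < length es" "f = es!i" by (metis in_set_conv_nth)
        then have "w \<in> {vs!i, vs!(Suc i)}" using ee w by auto
        moreover have "i < length vs" "Suc i < length vs" using i lv by auto
        ultimately show False using False by auto
      qed
      have "gpath MV ME ends (w#vs) (f#es)"
        unfolding gpath_def
      proof (intro conjI)
        show "\<forall>i<length (f # es). ends ((f # es) ! i) = {(w # vs) ! i, (w # vs) ! Suc i}"
        proof (intro allI impI)
          fix i assume "i < length (f#es)"
          then show "ends ((f # es) ! i) = {(w # vs) ! i, (w # vs) ! Suc i}"
            using ee w v0_def by (cases i) (auto simp: insert_commute)
        qed
      qed (use lv dv de sv se False fne wMV f in auto)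
      then have "length (f#es) \<le> length es" using pmax p by force
      then show False by simp
    next
      case True
      then obtain j where j: "j < length vs" "w = vs!j" by (metis in_set_conv_nth)
      have j0: "j \<noteq> 0"
      proof
        assume "j = 0" then have "w = v0" using j v0_def by simp
        then show False using w by simp
      qed
      define vs' where "vs' = take (j+1) vs"
      define es' where "es' = take j es @ [f]"
      have lvs': "length vs' = j+1" using j vs'_def by simp
      have les': "length es' = j+1" using j lv es'_def by simp
      have fnt: "f \<notin> set (take j es)"
      proof
        assume "f \<in> set (take j es)"
        then obtain i where i: "i < j" "f = es!i" using j lv
          by (auto simp: in_set_conv_nth)
        then have il: "i < length es" "Suc i < length vs" using j lv by auto
        have eq: "{vs!i, vs!(Suc i)} = {vs!0, vs!j}"
        proof -
          have "ends f = {vs!0, vs!j}" using w(1) j(2) v0_def by simp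
          moreover have "ends f = {vs!i, vs!(Suc i)}" using ee il i by simp
          ultimately show ?thesis by simp
        qed
        have "i < length vs" using il by auto
        then have "vs!i = vs!0 \<or> vs!i = vs!j" using eq by auto
        then show False
        proof
          assume "vs!i = vs!0" then have "i = 0" using nth_eq_iff_index_eq[OF dv, of i 0] il by (cases vs) auto
          then show False using i f e0_def by simp
        next
          assume "vs!i = vs!j" then have "i = j" using nth_eq_iff_index_eq[OF dv, of i j] il j by auto
          then show False using i by simp
        qed
      qed
      have "gcycw MV ME ends vs' es'"
        unfolding gcycw_def
      proof (intro conjI)
        show "\<forall>i<length vs'. ends (es' ! i) = {vs' ! i, vs' ! ((i + 1) mod length vs')}"
        proof (intro allI impI)
          fix i assume i: "i < length vs'"
          show "ends (es' ! i) = {vs' ! i, vs' ! ((i + 1) mod length vs')}"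
          proof (cases "i < j")
            case True
            then have "es'!i = es!i" "vs'!i = vs!i" "(i+1) mod length vs' = i+1" "vs'!(i+1) = vs!(i+1)"
              using lvs' j lv unfolding es'_def vs'_def by (auto simp: nth_append)
            then show ?thesis using ee True j lv by auto
          next
            case False
            then have ij: "i = j" using i lvs' by simp
            then have "es'!i = f" "vs'!i = w" "(i+1) mod length vs' = 0" "vs'!0 = v0"
              using lvs' j lv unfolding es'_def vs'_def v0_def by (auto simp: nth_append)
            then show ?thesis using w by (auto simp: insert_commute)
          qed
        qed
      qed (use lvs' les' dv de fnt sv se f j in \<open>auto simp: vs'_def es'_def dest: in_set_takeD\<close>)
      then show False using nc by blast
    qed
  qed
  have "v0 \<in> MV" using sv lv v0_def by auto
  then show ?thesis using uniq by blast
qed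



lemma count_edges:
  assumes "finite MV"
  shows "finite ME \<Longrightarrow> \<forall>e\<in>ME. ends e \<subseteq> MV \<and> card (ends e) = 2 \<Longrightarrow>
    \<forall>vs es. \<not> gcycw MV ME ends vs es \<Longrightarrow> card ME \<le> card MV"
  using assms
proof (induction MV arbitrary: ME rule: finite_remove_induct)
  case empty
  then have "ME = {}" by fastforce
  then show ?case by simp
next
  case (remove A ME)
  obtain v where v: "v \<in> A" and u: "\<forall>e\<in>ME. \<forall>e'\<in>ME. v \<in> ends e \<longrightarrow> v \<in> ends e' \<longrightarrow> e = e'"
    using leaf[of A ME ends] remove.prems remove.hyps by blast
  define ME' where "ME' = {e\<in>ME. v \<notin> ends e}"
  have c1: "card ME' \<le> card (A - {v})"
  proof (rule remove.IH[OF v])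
    show "finite ME'" using remove.prems ME'_def by simp
    show "\<forall>e\<in>ME'. ends e \<subseteq> A - {v} \<and> card (ends e) = 2" using remove.prems ME'_def by auto
    show "\<forall>vs es. \<not> gcycw (A - {v}) ME' ends vs es"
      using remove.prems ME'_def gcycw_mono[of "A - {v}" ME' ends _ _ A ME] by blast
  qed
  have c2: "card ME \<le> card ME' + 1"
  proof (cases "\<exists>e0\<in>ME. v \<in> ends e0")
    case True
    then obtain e0 where "e0 \<in> ME" "v \<in> ends e0" by blast
    then have "ME \<subseteq> insert e0 ME'" using u ME'_def by blast
    moreover have fME': "finite ME'" using remove.prems ME'_def by simp
    ultimately have "card ME \<le> card (insert e0 ME')"
      by (intro card_mono) auto
    also have "\<dots> \<le> card ME' + 1" using fME' by (simp add: card_insert_if)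
    finally show ?thesis .
  next
    case False
    then have "ME = ME'" using ME'_def by auto
    then show ?thesis by simp
  qed
  have "card A = Suc (card (A - {v}))"
    by (rule card.remove[OF remove.hyps(1) v])
  then show ?case using c1 c2 by linarith
qed

lemma graph_no_single: "graph V E \<Longrightarrow> {v} \<notin> E"
proof
  assume "graph V E" "{v} \<in> E"
  then obtain a b where "a \<noteq> b" "{v} = {a,b}" unfolding graph_def by blast
  then show False by (metis insertI1 insert_commute singletonD)
qed

lemma graph_card2: "graph V E \<Longrightarrow> e \<in> E \<Longrightarrow> card e = 2"
  unfolding graph_def by auto

lemma gcyc_simple:
  assumes g: "graph V E" and AV: "A \<subseteq> V" and c: "gcycw A {e\<in>E. e \<subseteq> A} id vs es"
  shows "is_cycle V E vs"
proof -
  have l: "length vs \<ge> 1" "length es = length vs" "distinct vs" "distinct es" "set vs \<subseteq> A"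
    and ee: "\<forall>i<length vs. es!i = {vs!i, vs!((i+1) mod length vs)}" and se: "set es \<subseteq> {e\<in>E. e \<subseteq> A}"
    using c unfolding gcycw_def by auto
  have inE: "\<And>i. i < length vs \<Longrightarrow> es!i \<in> E" using se l by (metis (no_types, lifting) mem_Collect_eq nth_mem subsetD)
  have n1: "length vs \<noteq> 1"
  proof
    assume "length vs = 1"
    then have "es!0 = {vs!0}" using ee by auto
    then show False using inE[of 0] \<open>length vs = 1\<close> graph_no_single[OF g] by auto
  qed
  have n2: "length vs \<noteq> 2"
  proof
    assume a: "length vs = 2"
    then have "es!0 = {vs!0, vs!1}" "es!1 = {vs!1, vs!0}" using ee by auto
    then have "es!0 = es!1" by (simp add: insert_commute)
    then show False using l a nth_eq_iff_index_eq[of es 0 1] by auto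
  qed
  have "length vs \<ge> 3" using l n1 n2 by linarith
  then show ?thesis unfolding is_cycle_def using l ee inE AV by auto
qed

lemma forest_bip:
  assumes g: "graph V E" and fin: "finite S0" and SV: "S0 \<subseteq> V"
    and nc: "\<forall>vs. is_cycle V E vs \<longrightarrow> \<not> set vs \<subseteq> S0"
  shows "\<exists>S1\<subseteq>S0. stable E S1 \<and> stable E (S0 - S1)"
  using fin
proof (induction S0 rule: finite_remove_induct)
  case empty
  then show ?case by (auto simp: stable_def)
next
  case (remove A)
  have nA: "\<forall>vs es. \<not> gcycw A {e\<in>E. e \<subseteq> A} id vs es"
  proof (intro allI notI)
    fix vs es assume c: "gcycw A {e\<in>E. e \<subseteq> A} id vs es"
    then have "is_cycle V E vs" using gcyc_simple[OF g _ c] remove.hyps SV by blast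
    moreover have "set vs \<subseteq> S0" using c remove.hyps unfolding gcycw_def by auto
    ultimately show False using nc by blast
  qed
  have finE: "finite {e\<in>E. e \<subseteq> A}"
    by (rule finite_subset[of _ "Pow A"]) (use remove.hyps in auto)
  obtain v where v: "v \<in> A" and u: "\<forall>e\<in>{e\<in>E. e \<subseteq> A}. \<forall>e'\<in>{e\<in>E. e \<subseteq> A}. v \<in> id e \<longrightarrow> v \<in> id e' \<longrightarrow> e = e'"
    using leaf[OF remove.hyps(1) finE _ nA remove.hyps(2)] graph_card2[OF g] by auto
  obtain S1' where S1': "S1' \<subseteq> A - {v}" "stable E S1'" "stable E ((A - {v}) - S1')"
    using remove.IH[OF v] by blast
  have un: "\<And>a b. a \<in> A \<Longrightarrow> b \<in> A \<Longrightarrow> {a,v} \<in> E \<Longrightarrow> {b,v} \<in> E \<Longrightarrow> a = b"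
  proof -
    fix a b assume "a \<in> A" "b \<in> A" "{a,v} \<in> E" "{b,v} \<in> E"
    then show "a = b" using u[rule_format, of "{a,v}" "{b,v}"] v by (auto simp: doubleton_eq_iff)
  qed
  have nv: "{v,v} \<notin> E" using graph_no_single[OF g] by simp
  show ?case
  proof (cases "\<exists>a\<in>S1'. {a,v} \<in> E")
    case True
    then obtain a where a: "a \<in> S1'" "{a,v} \<in> E" by blast
    have "stable E (A - S1')"
      unfolding stable_def
    proof (intro ballI)
      fix x y assume xy: "x \<in> A - S1'" "y \<in> A - S1'"
      show "{x, y} \<notin> E"
      proof (cases "x = v \<or> y = v")
        case True
        then show ?thesis
        proof
          assume xv: "x = v"
          show ?thesis
          proof
            assume yE: "{x,y} \<in> E"
            then have yv: "{y,v} \<in> E" using xv by (simp add: insert_commute)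
            have "y \<noteq> v" using yE xv nv by auto
            then have "y \<in> A" using xy by auto
            moreover have "a \<in> A" using a S1' by auto
            ultimately have "a = y" using un a(2) yv by blast
            then show False using a(1) xy(2) by blast
          qed
        next
          assume xv: "y = v"
          show ?thesis
          proof
            assume yE: "{x,y} \<in> E"
            then have yv: "{x,v} \<in> E" using xv by simp
            have "x \<noteq> v" using yE xv nv by auto
            then have "x \<in> A" using xy by auto
            moreover have "a \<in> A" using a S1' by auto
            ultimately have "a = x" using un a(2) yv by blast
            then show False using a(1) xy(1) by blast
          qed
        qed
      next
        case False
        then have "x \<in> (A - {v}) - S1'" "y \<in> (A - {v}) - S1'" using xy by auto
        then show ?thesis using S1'(3) unfolding stable_def by blast
      qed
    qed
    then show ?thesis using S1'(1,2) by (intro exI[of _ S1'] conjI) auto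
  next
    case False
    have "stable E (insert v S1')"
      unfolding stable_def
    proof (intro ballI)
      fix x y assume "x \<in> insert v S1'" "y \<in> insert v S1'"
      moreover have "{v,y} = {y,v}" by (rule insert_commute)
      ultimately show "{x,y} \<notin> E"
        using False S1'(2) nv unfolding stable_def by auto
    qed
    moreover have "A - insert v S1' = (A - {v}) - S1'" by auto
    ultimately show ?thesis using S1'(1,3) v by (intro exI[of _ "insert v S1'"] conjI) auto
  qed
qed



definition il :: "'a list \<Rightarrow> 'a list \<Rightarrow> 'a list" where
  "il vs es = map (\<lambda>m. if even m then vs!(m div 2) else es!(m div 2)) [0..<2*length vs]"

lemma il_len: "length (il vs es) = 2 * length vs" by (simp add: il_def)

lemma il_nth: "m < 2 * length vs \<Longrightarrow> il vs es ! m = (if even m then vs!(m div 2) else es!(m div 2))"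
  by (simp add: il_def)

lemma il_cycle:
  assumes ZV: "Z \<subseteq> V" and BV: "Bs \<subseteq> V - Z" and c2: "\<forall>b\<in>Bs. card (nbrs E b \<inter> Z) = 2"
    and c: "gcycw Z Bs (\<lambda>b. nbrs E b \<inter> Z) vs es"
  shows "is_cycle V E (il vs es) \<and> set (il vs es) = set vs \<union> set es"
proof -
  define k where "k = length vs"
  have k1: "k \<ge> 1" and le: "length es = k" and dv: "distinct vs" and de: "distinct es"
    and sv: "set vs \<subseteq> Z" and se: "set es \<subseteq> Bs"
    and ee: "\<forall>i<k. nbrs E (es!i) \<inter> Z = {vs!i, vs!((i+1) mod k)}"
    using c unfolding gcycw_def k_def by auto
  have k2: "k \<ge> 2"
  proof (rule ccontr)
    assume "\<not> k \<ge> 2"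
    then have "k = 1" using k1 by simp
    then have "nbrs E (es!0) \<inter> Z = {vs!0}" using ee by auto
    moreover have "es!0 \<in> Bs" using se le k1 by (metis nth_mem le_less_trans zero_less_one less_le_trans subsetD)
    ultimately show False using c2 by fastforce
  qed
  have edge1: "\<And>i. i < k \<Longrightarrow> {vs!i, es!i} \<in> E"
  proof -
    fix i assume "i < k"
    then have "vs!i \<in> nbrs E (es!i)" using ee by blast
    then show "{vs!i, es!i} \<in> E" by (simp add: nbrs_def)
  qed
  have edge2: "\<And>i. i < k \<Longrightarrow> {es!i, vs!((i+1) mod k)} \<in> E"
  proof -
    fix i assume "i < k"
    then have "vs!((i+1) mod k) \<in> nbrs E (es!i)" using ee by blast
    then show "{es!i, vs!((i+1) mod k)} \<in> E" by (simp add: nbrs_def insert_commute)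
  qed
  have nth: "\<And>m. m < 2*k \<Longrightarrow> il vs es ! m = (if even m then vs!(m div 2) else es!(m div 2))"
    using il_nth k_def by blast
  have len: "length (il vs es) = 2*k" using il_len k_def by simp
  have vsZ: "\<And>i. i < k \<Longrightarrow> vs!i \<in> Z" using sv k_def by auto
  have esB: "\<And>i. i < k \<Longrightarrow> es!i \<in> Bs" using se le by auto
  have setil: "set (il vs es) = set vs \<union> set es"
  proof
    show "set (il vs es) \<subseteq> set vs \<union> set es"
    proof
      fix x assume "x \<in> set (il vs es)"
      then obtain m where m: "m < 2*k" "x = il vs es ! m" using len by (metis in_set_conv_nth)
      then have "m div 2 < k" by simp
      then show "x \<in> set vs \<union> set es" using m nth[OF m(1)] le k_def by auto
    qed
  next
    show "set vs \<union> set es \<subseteq> set (il vs es)"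
    proof
      fix x assume "x \<in> set vs \<union> set es"
      then show "x \<in> set (il vs es)"
      proof
        assume "x \<in> set vs"
        then obtain i where i: "i < k" "x = vs!i" using k_def by (metis in_set_conv_nth)
        then have "2*i < 2*k" by simp
        then have "il vs es ! (2*i) = x" using nth i by simp
        then show ?thesis using \<open>2*i < 2*k\<close> len by (metis nth_mem)
      next
        assume "x \<in> set es"
        then obtain i where i: "i < k" "x = es!i" using le by (metis in_set_conv_nth)
        then have "2*i+1 < 2*k" by simp
        then have "il vs es ! (2*i+1) = x" using nth i by simp
        then show ?thesis using \<open>2*i+1 < 2*k\<close> len by (metis nth_mem)
      qed
    qed
  qed
  have dist: "distinct (il vs es)"
  proof -
    have "inj_on (\<lambda>m. if even m then vs!(m div 2) else es!(m div 2)) {0..<2*k}"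
    proof (rule inj_onI)
      fix m m' assume m: "m \<in> {0..<2*k}" "m' \<in> {0..<2*k}"
        and eq: "(if even m then vs!(m div 2) else es!(m div 2)) = (if even m' then vs!(m' div 2) else es!(m' div 2))"
      have a: "m div 2 < k" "m' div 2 < k" using m by auto
      show "m = m'"
      proof (cases "even m"; cases "even m'")
        assume "even m" "even m'"
        then have "vs!(m div 2) = vs!(m' div 2)" using eq by simp
        then have "m div 2 = m' div 2" using nth_eq_iff_index_eq[OF dv] a k_def by auto
        then show ?thesis using \<open>even m\<close> \<open>even m'\<close> by (metis dvd_mult_div_cancel)
      next
        assume "\<not> even m" "\<not> even m'"
        then have "es!(m div 2) = es!(m' div 2)" using eq by simp
        then have "m div 2 = m' div 2" using nth_eq_iff_index_eq[OF de] a le by auto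
        then show ?thesis using \<open>\<not> even m\<close> \<open>\<not> even m'\<close> by (metis odd_two_times_div_two_succ)
      next
        assume "even m" "\<not> even m'"
        then have "vs!(m div 2) = es!(m' div 2)" using eq by simp
        then show ?thesis using vsZ[OF a(1)] esB[OF a(2)] BV by auto
      next
        assume "\<not> even m" "even m'"
        then have "es!(m div 2) = vs!(m' div 2)" using eq by simp
        then show ?thesis using vsZ[OF a(2)] esB[OF a(1)] BV by auto
      qed
    qed
    then show ?thesis unfolding il_def k_def by (simp add: distinct_map)
  qed
  have edges: "\<forall>m < length (il vs es). {il vs es ! m, il vs es ! ((m + 1) mod length (il vs es))} \<in> E"
  proof (intro allI impI)
    fix m assume "m < length (il vs es)"
    then have m: "m < 2*k" using len by simp
    show "{il vs es ! m, il vs es ! ((m + 1) mod length (il vs es))} \<in> E"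
    proof (cases "even m")
      case True
      then obtain i where i: "m = 2*i" by blast
      have ik: "i < k" using m i by simp
      have "m + 1 < 2*k" using i ik by simp
      then have "(m+1) mod length (il vs es) = m+1" using len by simp
      moreover have "il vs es ! m = vs!i" using nth[OF m] True i by simp
      moreover have "il vs es ! (m+1) = es!i" using nth[OF \<open>m+1 < 2*k\<close>] i by simp
      ultimately show ?thesis using edge1[OF ik] by simp
    next
      case False
      then obtain i where i: "m = 2*i+1" by (metis oddE)
      have ik: "i < k" using m i by simp
      have md: "(m+1) mod length (il vs es) = 2 * ((i+1) mod k)" using len i
        by (simp add: mult_mod_right)
      have lt: "2 * ((i+1) mod k) < 2*k" using k1 by simp
      have "il vs es ! m = es!i" using nth[OF m] False i by simp
      moreover have "il vs es ! (2 * ((i+1) mod k)) = vs!((i+1) mod k)" using nth[OF lt] by simp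
      ultimately show ?thesis using edge2[OF ik] md by simp
    qed
  qed
  have "set (il vs es) \<subseteq> V" using setil sv se ZV BV by auto
  then have "is_cycle V E (il vs es)" unfolding is_cycle_def using len k2 dist edges by auto
  then show ?thesis using setil by simp
qed

lemma two_anti:
  assumes ZV: "Z \<subseteq> V" and BV: "Bs \<subseteq> V - Z" and c2: "\<forall>b\<in>Bs. card (nbrs E b \<inter> Z) = 2"
    and stZ: "stable E Z" and stB: "stable E Bs"
    and c1: "gcycw Z Bs (\<lambda>b. nbrs E b \<inter> Z) vs1 es1"
    and c1': "gcycw Z Bs (\<lambda>b. nbrs E b \<inter> Z) vs2 es2"
    and disj: "set vs1 \<inter> set vs2 = {}"
  shows "anticomplete E (set vs1 \<union> set es1) (set vs2 \<union> set es2)"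
proof -
  have e1: "\<And>b. b \<in> set es1 \<Longrightarrow> nbrs E b \<inter> Z \<subseteq> set vs1" using gcycw_ends[OF c1] by blast
  have e2: "\<And>b. b \<in> set es2 \<Longrightarrow> nbrs E b \<inter> Z \<subseteq> set vs2" using gcycw_ends[OF c1'] by blast
  have s1: "set vs1 \<subseteq> Z" "set es1 \<subseteq> Bs" using c1 unfolding gcycw_def by auto
  have s2: "set vs2 \<subseteq> Z" "set es2 \<subseteq> Bs" using c1' unfolding gcycw_def by auto
  have ne: "\<And>b. b \<in> Bs \<Longrightarrow> nbrs E b \<inter> Z \<noteq> {}" using c2 by fastforce
  have d: "(set vs1 \<union> set es1) \<inter> (set vs2 \<union> set es2) = {}"
  proof (rule ccontr)
    assume "(set vs1 \<union> set es1) \<inter> (set vs2 \<union> set es2) \<noteq> {}"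
    then obtain x where x: "x \<in> set vs1 \<union> set es1" "x \<in> set vs2 \<union> set es2" by blast
    show False
    proof (cases "x \<in> Z")
      case True
      then have "x \<in> set vs1" "x \<in> set vs2" using x s1 s2 BV by auto
      then show False using disj by blast
    next
      case False
      then have "x \<in> set es1" "x \<in> set es2" using x s1 s2 by auto
      then have "nbrs E x \<inter> Z \<subseteq> set vs1 \<inter> set vs2" using e1 e2 by blast
      then show False using disj ne \<open>x \<in> set es1\<close> s1 by blast
    qed
  qed
  have n: "\<forall>u\<in>set vs1 \<union> set es1. \<forall>w\<in>set vs2 \<union> set es2. {u, w} \<notin> E"
  proof (intro ballI notI)
    fix u w assume u: "u \<in> set vs1 \<union> set es1" and w: "w \<in> set vs2 \<union> set es2" and uw: "{u,w} \<in> E"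
    have wu: "{w,u} \<in> E" using uw by (simp add: insert_commute)
    show False
    proof (cases "u \<in> Z"; cases "w \<in> Z")
      assume "u \<in> Z" "w \<in> Z" then show False using stZ uw unfolding stable_def by blast
    next
      assume a: "u \<in> Z" "w \<notin> Z"
      then have "u \<in> set vs1" "w \<in> set es2" using u w s1 s2 BV by auto
      moreover have "u \<in> nbrs E w \<inter> Z" using uw a by (simp add: nbrs_def)
      ultimately show False using e2 disj by blast
    next
      assume a: "u \<notin> Z" "w \<in> Z"
      then have "w \<in> set vs2" "u \<in> set es1" using u w s1 s2 BV by auto
      moreover have "w \<in> nbrs E u \<inter> Z" using wu a by (simp add: nbrs_def)
      ultimately show False using e1 disj by blast
    next
      assume a: "u \<notin> Z" "w \<notin> Z"
      then have "u \<in> Bs" "w \<in> Bs" using u w s1 s2 by auto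
      then show False using stB uw unfolding stable_def by blast
    qed
  qed
  show ?thesis unfolding anticomplete_def using d n by blast
qed

lemma H_no_disjoint:
  assumes so: "sO_free s V E" and ZV: "Z \<subseteq> V" and BV: "Bs \<subseteq> V - Z"
    and c2: "\<forall>b\<in>Bs. card (nbrs E b \<inter> Z) = 2"
    and stZ: "stable E Z" and stB: "stable E Bs"
  shows "\<not> (\<exists>cs. length cs = s \<and> (\<forall>i<s. \<exists>es. gcycw Z Bs (\<lambda>b. nbrs E b \<inter> Z) (cs!i) es) \<and>
           (\<forall>i<s. \<forall>j<s. i \<noteq> j \<longrightarrow> set (cs!i) \<inter> set (cs!j) = {}))"
proof
  assume "\<exists>cs. length cs = s \<and> (\<forall>i<s. \<exists>es. gcycw Z Bs (\<lambda>b. nbrs E b \<inter> Z) (cs!i) es) \<and>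
           (\<forall>i<s. \<forall>j<s. i \<noteq> j \<longrightarrow> set (cs!i) \<inter> set (cs!j) = {})"
  then obtain cs where l: "length cs = s" and cyc: "\<forall>i<s. \<exists>es. gcycw Z Bs (\<lambda>b. nbrs E b \<inter> Z) (cs!i) es"
    and dj: "\<forall>i<s. \<forall>j<s. i \<noteq> j \<longrightarrow> set (cs!i) \<inter> set (cs!j) = {}" by blast
  obtain ES where ES: "\<forall>i<s. gcycw Z Bs (\<lambda>b. nbrs E b \<inter> Z) (cs!i) (ES i)"
    using cyc by metis
  define gs where "gs = map (\<lambda>i. il (cs!i) (ES i)) [0..<s]"
  have gsn: "\<And>i. i < s \<Longrightarrow> gs!i = il (cs!i) (ES i)" unfolding gs_def by simp
  have "length gs = s" unfolding gs_def by simp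
  moreover have "\<forall>i<s. is_cycle V E (gs!i)"
    using il_cycle[OF ZV BV c2] ES gsn by auto
  moreover have "\<forall>i<s. \<forall>j<s. i \<noteq> j \<longrightarrow> anticomplete E (set (gs!i)) (set (gs!j))"
  proof (intro allI impI)
    fix i j assume ij: "i < s" "j < s" "i \<noteq> j"
    have "set (gs!i) = set (cs!i) \<union> set (ES i)" "set (gs!j) = set (cs!j) \<union> set (ES j)"
      using il_cycle[OF ZV BV c2] ES gsn ij by auto
    then show "anticomplete E (set (gs!i)) (set (gs!j))"
      using two_anti[OF ZV BV c2 stZ stB] ES dj ij by simp
  qed
  ultimately show False using so unfolding sO_free_def by blast
qed



lemma EP_transfer:
  fixes MV :: "'v set" and ME :: "'e set" and ends :: "'e \<Rightarrow> 'v set"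
  assumes EP: "EP_bound s phi" and fin: "finite MV" "finite ME"
    and E2: "\<forall>e\<in>ME. ends e \<subseteq> MV \<and> card (ends e) = 2"
    and nd: "\<not> (\<exists>cs. length cs = s \<and> (\<forall>i<s. \<exists>es. gcycw MV ME ends (cs!i) es) \<and>
           (\<forall>i<s. \<forall>j<s. i \<noteq> j \<longrightarrow> set (cs!i) \<inter> set (cs!j) = {}))"
  shows "\<exists>H\<subseteq>MV. card H \<le> phi \<and> (\<forall>vs es. gcycw MV ME ends vs es \<longrightarrow> set vs \<inter> H \<noteq> {})"
proof -
  obtain f :: "'v \<Rightarrow> nat" where f: "inj_on f MV" using finite_imp_inj_to_nat_seg[OF fin(1)] by blast
  obtain g :: "'e \<Rightarrow> nat" where g: "inj_on g ME" using finite_imp_inj_to_nat_seg[OF fin(2)] by blast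
  define fi where "fi = the_inv_into MV f"
  define gi where "gi = the_inv_into ME g"
  define MVn where "MVn = f ` MV"
  define MEn where "MEn = g ` ME"
  define endsn where "endsn = (\<lambda>k. f ` ends (gi k))"
  have fif: "\<And>x. x \<in> MV \<Longrightarrow> fi (f x) = x" using f fi_def the_inv_into_f_f by fastforce
  have gig: "\<And>x. x \<in> ME \<Longrightarrow> gi (g x) = x" using g gi_def the_inv_into_f_f by fastforce
  have ffi: "\<And>y. y \<in> MVn \<Longrightarrow> f (fi y) = y \<and> fi y \<in> MV" using f fif MVn_def by auto
  have ggi: "\<And>y. y \<in> MEn \<Longrightarrow> g (gi y) = y \<and> gi y \<in> ME" using g gig MEn_def by auto
  have en: "\<And>e. e \<in> ME \<Longrightarrow> endsn (g e) = f ` ends e" using gig endsn_def by simp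
  have mg: "multigraph MVn MEn endsn"
    unfolding multigraph_def
  proof (intro conjI ballI)
    show "finite MVn" "finite MEn" using fin MVn_def MEn_def by auto
  next
    fix k assume "k \<in> MEn"
    then obtain e where e: "e \<in> ME" "k = g e" using MEn_def by auto
    have "card (endsn k) = 2" using en[OF e(1)] e E2 card_image[OF inj_on_subset[OF f, of "ends e"]] by auto
    moreover have "endsn k \<subseteq> MVn" using en[OF e(1)] e E2 MVn_def by auto
    ultimately show "endsn k \<subseteq> MVn" "1 \<le> card (endsn k)" "card (endsn k) \<le> 2" by auto
  qed
  have fwd: "\<And>vs es. gcycw MV ME ends vs es \<Longrightarrow> gcycw MVn MEn endsn (map f vs) (map g es)"
  proof -
    fix vs es assume c: "gcycw MV ME ends vs es"
    then have l: "length vs \<ge> 1" "length es = length vs" "distinct vs" "distinct es" "set vs \<subseteq> MV" "set es \<subseteq> ME"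
      and ee: "\<forall>i<length vs. ends (es!i) = {vs!i, vs!((i+1) mod length vs)}" unfolding gcycw_def by auto
    have "distinct (map f vs)" using l inj_on_subset[OF f l(5)] by (simp add: distinct_map)
    moreover have "distinct (map g es)" using l inj_on_subset[OF g l(6)] by (simp add: distinct_map)
    moreover have "\<forall>i<length vs. endsn (map g es ! i) = {map f vs ! i, map f vs ! ((i+1) mod length vs)}"
    proof (intro allI impI)
      fix i assume i: "i < length vs"
      then have "es!i \<in> ME" using l by auto
      moreover have "(i+1) mod length vs < length vs" using l by (intro mod_less_divisor) linarith
      ultimately show "endsn (map g es ! i) = {map f vs ! i, map f vs ! ((i+1) mod length vs)}"
        using en ee i l by simp
    qed
    ultimately show "gcycw MVn MEn endsn (map f vs) (map g es)"
      unfolding gcycw_def using l MVn_def MEn_def by auto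
  qed
  have bwd: "\<And>ws ks. gcycw MVn MEn endsn ws ks \<Longrightarrow> gcycw MV ME ends (map fi ws) (map gi ks)"
  proof -
    fix ws ks assume c: "gcycw MVn MEn endsn ws ks"
    then have l: "length ws \<ge> 1" "length ks = length ws" "distinct ws" "distinct ks" "set ws \<subseteq> MVn" "set ks \<subseteq> MEn"
      and ee: "\<forall>i<length ws. endsn (ks!i) = {ws!i, ws!((i+1) mod length ws)}" unfolding gcycw_def by auto
    have ifi: "inj_on fi MVn" unfolding MVn_def fi_def by (rule inj_on_the_inv_into[OF f])
    have igi: "inj_on gi MEn" unfolding MEn_def gi_def by (rule inj_on_the_inv_into[OF g])
    have "distinct (map fi ws)" using l inj_on_subset[OF ifi l(5)] by (simp add: distinct_map)
    moreover have "distinct (map gi ks)" using l inj_on_subset[OF igi l(6)] by (simp add: distinct_map)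
    moreover have "set (map fi ws) \<subseteq> MV" using l ffi by auto
    moreover have "set (map gi ks) \<subseteq> ME" using l ggi by auto
    moreover have "\<forall>i<length ws. ends (map gi ks ! i) = {map fi ws ! i, map fi ws ! ((i+1) mod length ws)}"
    proof (intro allI impI)
      fix i assume i: "i < length ws"
      have j: "(i+1) mod length ws < length ws" using l by (intro mod_less_divisor) linarith
      have k: "ks!i \<in> MEn" using l i by auto
      have sub: "ends (gi (ks!i)) \<subseteq> MV" using ggi[OF k] E2 by auto
      have "fi ` endsn (ks!i) = fi ` f ` ends (gi (ks!i))" using endsn_def by simp
      also have "\<dots> = ends (gi (ks!i))" using sub fif by (force simp: image_comp)
      finally have "ends (gi (ks!i)) = fi ` {ws!i, ws!((i+1) mod length ws)}" using ee i by simp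
      then show "ends (map gi ks ! i) = {map fi ws ! i, map fi ws ! ((i+1) mod length ws)}"
        using i j l by simp
    qed
    ultimately show "gcycw MV ME ends (map fi ws) (map gi ks)"
      unfolding gcycw_def using l by auto
  qed
  have ndn: "\<not> (\<exists>cs. length cs = s \<and> (\<forall>i<s. mcycle MVn MEn endsn (cs ! i)) \<and>
          (\<forall>i<s. \<forall>j<s. i \<noteq> j \<longrightarrow> set (cs ! i) \<inter> set (cs ! j) = {}))"
  proof
    assume "\<exists>cs. length cs = s \<and> (\<forall>i<s. mcycle MVn MEn endsn (cs ! i)) \<and>
          (\<forall>i<s. \<forall>j<s. i \<noteq> j \<longrightarrow> set (cs ! i) \<inter> set (cs ! j) = {})"
    then obtain cs where l: "length cs = s" and cy: "\<forall>i<s. mcycle MVn MEn endsn (cs ! i)"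
      and dj: "\<forall>i<s. \<forall>j<s. i \<noteq> j \<longrightarrow> set (cs ! i) \<inter> set (cs ! j) = {}" by blast
    define cs' where "cs' = map (map fi) cs"
    have "length cs' = s" using l cs'_def by simp
    moreover have "\<forall>i<s. \<exists>es. gcycw MV ME ends (cs'!i) es"
    proof (intro allI impI)
      fix i assume "i < s"
      then obtain ks where "gcycw MVn MEn endsn (cs!i) ks" using cy mcycle_gcycw by blast
      then show "\<exists>es. gcycw MV ME ends (cs'!i) es" using bwd \<open>i < s\<close> l cs'_def by auto
    qed
    moreover have "\<forall>i<s. \<forall>j<s. i \<noteq> j \<longrightarrow> set (cs'!i) \<inter> set (cs'!j) = {}"
    proof (intro allI impI)
      fix i j assume ij: "i < s" "j < s" "i \<noteq> j"
      have si: "set (cs!i) \<subseteq> MVn" "set (cs!j) \<subseteq> MVn"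
        using cy ij mcycle_def by (metis mcycle_def)+
      show "set (cs'!i) \<inter> set (cs'!j) = {}"
      proof (rule ccontr)
        assume "set (cs'!i) \<inter> set (cs'!j) \<noteq> {}"
        then obtain a b where ab: "a \<in> set (cs!i)" "b \<in> set (cs!j)" "fi a = fi b"
          using ij l cs'_def by auto
        have "a \<in> MVn" "b \<in> MVn" using si ab by auto
        then have "a = f (fi a)" "b = f (fi b)" using ffi by auto
        then have "a = b" using ab(3) by metis
        then show False using dj ij ab by blast
      qed
    qed
    ultimately show False using nd by blast
  qed
  obtain Hn where Hn: "Hn \<subseteq> MVn" "card Hn \<le> phi" "\<forall>vs. mcycle MVn MEn endsn vs \<longrightarrow> set vs \<inter> Hn \<noteq> {}"
    using EP[unfolded EP_bound_def, rule_format, OF mg ndn] by blast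
  define H where "H = fi ` Hn"
  have "H \<subseteq> MV" using Hn ffi H_def by auto
  moreover have "finite Hn" using Hn(1) fin(1) MVn_def finite_subset by blast
  then have "card H \<le> card Hn" unfolding H_def by (rule card_image_le)
  then have "card H \<le> phi" using Hn(2) by linarith
  moreover have "\<forall>vs es. gcycw MV ME ends vs es \<longrightarrow> set vs \<inter> H \<noteq> {}"
  proof (intro allI impI)
    fix vs es assume c: "gcycw MV ME ends vs es"
    then have "mcycle MVn MEn endsn (map f vs)" using fwd mcycle_gcycw by blast
    then obtain x where x: "x \<in> set (map f vs)" "x \<in> Hn" using Hn by blast
    then obtain v where v: "v \<in> set vs" "x = f v" by auto
    have "v \<in> MV" using c v unfolding gcycw_def by auto
    then have "v \<in> H" using fif v x H_def by force
    then show "set vs \<inter> H \<noteq> {}" using v by blast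
  qed
  ultimately show ?thesis by blast
qed



lemma explode_list_char:
  "distinct xs \<Longrightarrow> set xs \<subseteq> Z \<Longrightarrow> Z \<subseteq> V \<Longrightarrow>
   explode_list xs ((V,E),Z) =
     ((V - (set xs \<union> {u \<in> V - Z. \<exists>x\<in>set xs. {u,x} \<in> E}),
       {e\<in>E. e \<inter> (set xs \<union> {u \<in> V - Z. \<exists>x\<in>set xs. {u,x} \<in> E}) = {}}), Z - set xs)"
proof (induction xs arbitrary: V E Z)
  case Nil
  then show ?case by (simp add: explode_list_def)
next
  case (Cons x xs)
  define D1 where "D1 = {x} \<union> (nbrs E x \<inter> (V - Z))"
  define V1 where "V1 = V - D1"
  define E1 where "E1 = {e\<in>E. e \<inter> D1 = {}}"
  have ex: "explode x ((V,E),Z) = ((V1, E1), Z - {x})"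
    unfolding explode_def del_vertices_def V1_def E1_def D1_def by simp
  have step: "explode_list (x#xs) ((V,E),Z) = explode_list xs ((V1, E1), Z - {x})"
    using ex unfolding explode_list_def by simp
  have xZ: "x \<in> Z" and dxs: "distinct xs" "x \<notin> set xs" and sxs: "set xs \<subseteq> Z" using Cons.prems by auto
  have "Z - {x} \<subseteq> V1" using Cons.prems unfolding V1_def D1_def by auto
  then have IH: "explode_list xs ((V1, E1), Z - {x}) =
     ((V1 - (set xs \<union> {u \<in> V1 - (Z - {x}). \<exists>y\<in>set xs. {u,y} \<in> E1}),
       {e\<in>E1. e \<inter> (set xs \<union> {u \<in> V1 - (Z - {x}). \<exists>y\<in>set xs. {u,y} \<in> E1}) = {}}), Z - {x} - set xs)"
    using Cons.IH[of "Z - {x}" V1 E1] dxs sxs by blast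
  define D' where "D' = set xs \<union> {u \<in> V1 - (Z - {x}). \<exists>y\<in>set xs. {u,y} \<in> E1}"
  define D where "D = set (x#xs) \<union> {u \<in> V - Z. \<exists>y\<in>set (x#xs). {u,y} \<in> E}"
  have DD: "D1 \<union> D' = D"
  proof
    show "D1 \<union> D' \<subseteq> D"
    proof
      fix u assume "u \<in> D1 \<union> D'"
      then consider "u = x" | "u \<in> nbrs E x \<inter> (V - Z)" | "u \<in> set xs"
        | "u \<in> V1 - (Z - {x})" "\<exists>y\<in>set xs. {u,y} \<in> E1" unfolding D1_def D'_def by blast
      then show "u \<in> D"
      proof cases
        case 1 then show ?thesis unfolding D_def by simp
      next
        case 2 then show ?thesis unfolding D_def nbrs_def by auto
      next
        case 3 then show ?thesis unfolding D_def by simp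
      next
        case 4
        then have "u \<in> V" "u \<noteq> x" "u \<notin> Z" unfolding V1_def D1_def by auto
        moreover obtain y where "y \<in> set xs" "{u,y} \<in> E" using 4(2) unfolding E1_def by blast
        ultimately show ?thesis unfolding D_def by auto
      qed
    qed
  next
    show "D \<subseteq> D1 \<union> D'"
    proof
      fix u assume "u \<in> D"
      then consider "u = x" | "u \<in> set xs" | y where "u \<in> V - Z" "y \<in> set (x#xs)" "{u,y} \<in> E"
        unfolding D_def by auto
      then show "u \<in> D1 \<union> D'"
      proof cases
        case 1 then show ?thesis unfolding D1_def by simp
      next
        case 2 then show ?thesis unfolding D'_def by simp
      next
        case (3 y)
        show ?thesis
        proof (cases "u \<in> D1")
          case True then show ?thesis by simp
        next
          case False
          show ?thesis
          proof (cases "y = x")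
            case True
            then have "u \<in> nbrs E x" using 3 by (simp add: nbrs_def)
            then show ?thesis using 3 unfolding D1_def by auto
          next
            case False
            then have y: "y \<in> set xs" using 3 by simp
            then have "y \<in> Z" "y \<noteq> x" using sxs dxs by auto
            then have "y \<notin> D1" unfolding D1_def by auto
            then have "{u,y} \<in> E1" using 3 \<open>u \<notin> D1\<close> unfolding E1_def by auto
            moreover have "u \<in> V1 - (Z - {x})" using 3 \<open>u \<notin> D1\<close> unfolding V1_def by auto
            ultimately show ?thesis using y unfolding D'_def by blast
          qed
        qed
      qed
    qed
  qed
  have "V1 - D' = V - D" using DD unfolding V1_def by blast
  moreover have "{e\<in>E1. e \<inter> D' = {}} = {e\<in>E. e \<inter> D = {}}" using DD unfolding E1_def by blast
  moreover have "Z - {x} - set xs = Z - set (x#xs)" by auto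
  ultimately show ?case using step IH unfolding D_def D'_def by simp
qed



theorem mainTheorem14:
  fixes s :: nat and phi :: nat and V :: "'a set" and E :: "'a set set" and Z :: "'a set"
  assumes "s \<ge> 1"
    and "EP_bound s phi"
    and "dyadic s V E Z"
  shows "\<exists>xs. distinct xs \<and> set xs \<subseteq> Z \<and> card (set xs) \<le> 2 * phi \<and>
    (let ((V', E'), Z') = explode_list xs ((V, E), Z) in
       dyadic s V' E' Z' \<and> card (binary_vertices V' E' Z') \<le> 2 * card Z)"
proof -
  have g: "graph V E" and so: "sO_free s V E" and ch: "cycle_hitting V E Z" and stZ: "stable E Z"
    and deg: "\<forall>v \<in> V - Z. card (nbrs E v \<inter> Z) \<le> 2"
    using assms(3) unfolding dyadic_def plantation_def by auto
  have finV: "finite V" using g unfolding graph_def by simp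
  have ZV: "Z \<subseteq> V" using ch unfolding cycle_hitting_def by simp
  have finZ: "finite Z" using finV ZV finite_subset by blast
  define B where "B = binary_vertices V E Z"
  define ends where "ends = (\<lambda>b. nbrs E b \<inter> Z)"
  have BV: "B \<subseteq> V - Z" unfolding B_def binary_vertices_def by auto
  have finB: "finite B" using BV finV finite_subset by blast
  have B2: "\<forall>b\<in>B. card (nbrs E b \<inter> Z) = 2" unfolding B_def binary_vertices_def by auto
  have Bnc: "\<forall>vs. is_cycle V E vs \<longrightarrow> \<not> set vs \<subseteq> B"
    using ch BV unfolding cycle_hitting_def by blast
  obtain B1 where B1: "B1 \<subseteq> B" "stable E B1" "stable E (B - B1)"
    using forest_bip[OF g finB _ Bnc] BV by blast
  have getX: "\<And>Bs. Bs \<subseteq> B \<Longrightarrow> stable E Bs \<Longrightarrow>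
      \<exists>X\<subseteq>Z. card X \<le> phi \<and> (\<forall>vs es. gcycw Z Bs ends vs es \<longrightarrow> set vs \<inter> X \<noteq> {})"
  proof -
    fix Bs assume Bs: "Bs \<subseteq> B" "stable E Bs"
    have BsV: "Bs \<subseteq> V - Z" using Bs BV by auto
    have Bs2: "\<forall>b\<in>Bs. card (nbrs E b \<inter> Z) = 2" using Bs B2 by auto
    show "\<exists>X\<subseteq>Z. card X \<le> phi \<and> (\<forall>vs es. gcycw Z Bs ends vs es \<longrightarrow> set vs \<inter> X \<noteq> {})"
      unfolding ends_def
    proof (rule EP_transfer[OF assms(2) finZ])
      show "finite Bs" using Bs finB finite_subset by blast
      show "\<forall>e\<in>Bs. nbrs E e \<inter> Z \<subseteq> Z \<and> card (nbrs E e \<inter> Z) = 2" using Bs2 by auto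
      show "\<not> (\<exists>cs. length cs = s \<and> (\<forall>i<s. \<exists>es. gcycw Z Bs (\<lambda>b. nbrs E b \<inter> Z) (cs!i) es) \<and>
           (\<forall>i<s. \<forall>j<s. i \<noteq> j \<longrightarrow> set (cs!i) \<inter> set (cs!j) = {}))"
        by (rule H_no_disjoint[OF so ZV BsV Bs2 stZ Bs(2)])
    qed
  qed
  obtain X1 where X1: "X1 \<subseteq> Z" "card X1 \<le> phi" "\<forall>vs es. gcycw Z B1 ends vs es \<longrightarrow> set vs \<inter> X1 \<noteq> {}"
    using getX[OF B1(1,2)] by blast
  obtain X2 where X2: "X2 \<subseteq> Z" "card X2 \<le> phi" "\<forall>vs es. gcycw Z (B - B1) ends vs es \<longrightarrow> set vs \<inter> X2 \<noteq> {}"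
    using getX[OF _ B1(3)] by blast
  define X where "X = X1 \<union> X2"
  have XZ: "X \<subseteq> Z" using X1 X2 X_def by auto
  have finX: "finite X" using XZ finZ finite_subset by blast
  obtain xs where xs: "distinct xs" "set xs = X" using finite_distinct_list[OF finX] by blast
  have cardX: "card (set xs) \<le> 2 * phi"
  proof -
    have "card X \<le> card X1 + card X2" unfolding X_def by (rule card_Un_le)
    then show ?thesis using xs(2) X1(2) X2(2) by simp
  qed
  define D where "D = X \<union> {u \<in> V - Z. \<exists>x\<in>X. {u,x} \<in> E}"
  define V' where "V' = V - D"
  define E' where "E' = {e\<in>E. e \<inter> D = {}}"
  define Z' where "Z' = Z - X"
  have expl: "explode_list xs ((V, E), Z) = ((V', E'), Z')"
    using explode_list_char[OF xs(1) _ ZV, of E] xs XZ unfolding V'_def E'_def Z'_def D_def by simp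
  have V'V: "V' \<subseteq> V" and E'E: "E' \<subseteq> E" and Z'Z: "Z' \<subseteq> Z" unfolding V'_def E'_def Z'_def by auto
  have E'in: "\<And>u w. u \<in> V' \<Longrightarrow> w \<in> V' \<Longrightarrow> {u,w} \<in> E \<Longrightarrow> {u,w} \<in> E'"
    unfolding V'_def E'_def by auto
  have Z'V': "Z' \<subseteq> V'" using ZV unfolding Z'_def V'_def D_def by auto
  have g': "graph V' E'"
    unfolding graph_def
  proof (intro conjI ballI)
    show "finite V'" using finV V'V finite_subset by blast
  next
    fix e assume e: "e \<in> E'"
    then obtain u w where uw: "u \<noteq> w" "u \<in> V" "w \<in> V" "e = {u,w}" using g E'E unfolding graph_def by blast
    then have "u \<in> V'" "w \<in> V'" using e unfolding E'_def V'_def by auto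
    then show "\<exists>u w. u \<noteq> w \<and> u \<in> V' \<and> w \<in> V' \<and> e = {u, w}" using uw by blast
  qed
  have cyc': "\<And>vs. is_cycle V' E' vs \<Longrightarrow> is_cycle V E vs"
    unfolding is_cycle_def using V'V E'E by blast
  have so': "sO_free s V' E'"
    unfolding sO_free_def
  proof
    assume "\<exists>cs. length cs = s \<and> (\<forall>i<s. is_cycle V' E' (cs ! i)) \<and>
      (\<forall>i<s. \<forall>j<s. i \<noteq> j \<longrightarrow> anticomplete E' (set (cs ! i)) (set (cs ! j)))"
    then obtain cs where cs: "length cs = s" "\<forall>i<s. is_cycle V' E' (cs ! i)"
      "\<forall>i<s. \<forall>j<s. i \<noteq> j \<longrightarrow> anticomplete E' (set (cs ! i)) (set (cs ! j))" by blast
    have "\<forall>i<s. \<forall>j<s. i \<noteq> j \<longrightarrow> anticomplete E (set (cs ! i)) (set (cs ! j))"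
    proof (intro allI impI)
      fix i j assume ij: "i < s" "j < s" "i \<noteq> j"
      have si: "set (cs!i) \<subseteq> V'" "set (cs!j) \<subseteq> V'" using cs(2) ij unfolding is_cycle_def by auto
      have "anticomplete E' (set (cs ! i)) (set (cs ! j))" using cs(3) ij by blast
      then show "anticomplete E (set (cs ! i)) (set (cs ! j))"
        unfolding anticomplete_def using si E'in by blast
    qed
    then show False using so cs cyc' unfolding sO_free_def by blast
  qed
  have ch': "cycle_hitting V' E' Z'"
    unfolding cycle_hitting_def
  proof (intro conjI allI impI)
    show "Z' \<subseteq> V'" by (rule Z'V')
  next
    fix vs assume c: "is_cycle V' E' vs"
    then obtain z where z: "z \<in> set vs" "z \<in> Z" using cyc' ch unfolding cycle_hitting_def by blast
    have "z \<in> V'" using c z unfolding is_cycle_def by auto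
    then have "z \<notin> X" unfolding V'_def D_def by auto
    then show "set vs \<inter> Z' \<noteq> {}" using z unfolding Z'_def by blast
  qed
  have stZ': "stable E' Z'" using stZ E'E Z'Z unfolding stable_def by blast
  have key: "\<And>v. v \<in> V' - Z' \<Longrightarrow> v \<in> V - Z \<and> nbrs E v \<inter> X = {} \<and> nbrs E' v \<inter> Z' = nbrs E v \<inter> Z"
  proof -
    fix v assume v: "v \<in> V' - Z'"
    then have vV: "v \<in> V" "v \<notin> D" unfolding V'_def by auto
    then have vX: "v \<notin> X" unfolding D_def by auto
    then have vZ: "v \<notin> Z" using v unfolding Z'_def by auto
    have nX: "nbrs E v \<inter> X = {}"
    proof (rule ccontr)
      assume "nbrs E v \<inter> X \<noteq> {}"
      then obtain x where "x \<in> X" "{x,v} \<in> E" unfolding nbrs_def by auto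
      then have "v \<in> D" using vV vZ unfolding D_def by (auto simp: insert_commute)
      then show False using vV by simp
    qed
    have "nbrs E v \<inter> Z \<subseteq> nbrs E' v \<inter> Z'"
    proof
      fix u assume u: "u \<in> nbrs E v \<inter> Z"
      then have uX: "u \<notin> X" using nX by auto
      have "{u,v} \<in> E" using u unfolding nbrs_def by simp
      moreover have "u \<notin> D" using uX u unfolding D_def by auto
      ultimately have "{u,v} \<in> E'" using vV unfolding E'_def by auto
      then show "u \<in> nbrs E' v \<inter> Z'" using u uX unfolding nbrs_def Z'_def by auto
    qed
    moreover have "nbrs E' v \<inter> Z' \<subseteq> nbrs E v \<inter> Z" using E'E Z'Z unfolding nbrs_def by auto
    ultimately show "v \<in> V - Z \<and> nbrs E v \<inter> X = {} \<and> nbrs E' v \<inter> Z' = nbrs E v \<inter> Z"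
      using vV vZ nX by blast
  qed
  have deg': "\<forall>v \<in> V' - Z'. card (nbrs E' v \<inter> Z') \<le> 2"
    using key deg by auto
  have dy: "dyadic s V' E' Z'"
    unfolding dyadic_def plantation_def using g' so' ch' stZ' deg' by blast
  define C1 where "C1 = {b\<in>B1. ends b \<inter> X1 = {}}"
  define C2 where "C2 = {b\<in>B - B1. ends b \<inter> X2 = {}}"
  have sub: "binary_vertices V' E' Z' \<subseteq> C1 \<union> C2"
  proof
    fix v assume "v \<in> binary_vertices V' E' Z'"
    then have v: "v \<in> V' - Z'" "card (nbrs E' v \<inter> Z') = 2" unfolding binary_vertices_def by auto
    then have "v \<in> B" "ends v \<inter> X = {}" using key[OF v(1)] unfolding B_def binary_vertices_def ends_def by auto
    then show "v \<in> C1 \<union> C2" unfolding C1_def C2_def X_def by auto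
  qed
  have cnt: "\<And>Bs Xj. Bs \<subseteq> B \<Longrightarrow> Xj \<subseteq> Z \<Longrightarrow> (\<forall>vs es. gcycw Z Bs ends vs es \<longrightarrow> set vs \<inter> Xj \<noteq> {}) \<Longrightarrow>
     card {b\<in>Bs. ends b \<inter> Xj = {}} \<le> card Z"
  proof -
    fix Bs Xj assume a: "Bs \<subseteq> B" "Xj \<subseteq> Z" "\<forall>vs es. gcycw Z Bs ends vs es \<longrightarrow> set vs \<inter> Xj \<noteq> {}"
    have "card {b\<in>Bs. ends b \<inter> Xj = {}} \<le> card (Z - Xj)"
    proof (rule count_edges)
      show "finite (Z - Xj)" using finZ by simp
      have "finite Bs" using a(1) finB finite_subset by blast
      then show "finite {b\<in>Bs. ends b \<inter> Xj = {}}" by simp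
      show "\<forall>e\<in>{b\<in>Bs. ends b \<inter> Xj = {}}. ends e \<subseteq> Z - Xj \<and> card (ends e) = 2"
        using a(1) B2 unfolding ends_def by auto
      show "\<forall>vs es. \<not> gcycw (Z - Xj) {b\<in>Bs. ends b \<inter> Xj = {}} ends vs es"
      proof (intro allI notI)
        fix vs es assume c: "gcycw (Z - Xj) {b\<in>Bs. ends b \<inter> Xj = {}} ends vs es"
        then have "gcycw Z Bs ends vs es" by (rule gcycw_mono) auto
        then have "set vs \<inter> Xj \<noteq> {}" using a(3) by blast
        moreover have "set vs \<subseteq> Z - Xj" using c unfolding gcycw_def by auto
        ultimately show False by blast
      qed
    qed
    also have "\<dots> \<le> card Z" using finZ by (simp add: card_mono)
    finally show "card {b\<in>Bs. ends b \<inter> Xj = {}} \<le> card Z" .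
  qed
  have c1: "card C1 \<le> card Z" unfolding C1_def using cnt[OF B1(1) X1(1) X1(3)] .
  have c2: "card C2 \<le> card Z" unfolding C2_def using cnt[OF _ X2(1) X2(3)] by blast
  have finC: "finite (C1 \<union> C2)" using finB unfolding C1_def C2_def
    by (metis (no_types, lifting) B1(1) Diff_subset finite_Un finite_subset mem_Collect_eq subsetI)
  have "card (binary_vertices V' E' Z') \<le> card (C1 \<union> C2)" using card_mono[OF finC sub] .
  also have "\<dots> \<le> card C1 + card C2" by (rule card_Un_le)
  finally have cb: "card (binary_vertices V' E' Z') \<le> 2 * card Z" using c1 c2 by linarith
  show ?thesis
    using xs XZ cardX dy cb expl by (intro exI[of _ xs]) simp
qed

end
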